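(* Let $(\mathcal{B}_1,\mathcal{B}_0)$ be a Rota-Baxter operator on a crossed module of Lie groups $(H,G,t,\Phi)$. Let $G\ltimes_\Phi H$ be the semi-direct product Lie group $G\times H$ with product $(a,p)\cdot_\Phi(b,q)=(ab,\ p\,\Phi(a)q)$. Define $\mathcal{B}:G\ltimes_\Phi H\to G\ltimes_\Phi H$ by $$\mathcal{B}(a,p)=\Big(\mathcal{B}_0(a),\ \Phi(\mathcal{B}_0(a))\,\mathcal{B}_1\big(\Phi(\mathcal{B}_0(a)^{-1}a^{-1})p\big)\Big),\qquad a\in G,\ p\in H.$$ Then $\mathcal{B}$ is a Rota-Baxter operator on the Lie group $(G\ltimes_\Phi H,\cdot_\Phi)$.
   Context: A crossed module of Lie groups is a quadruple $(H,G,t,\Phi)$ where $H,G$ are Lie groups, $t:H\to G$ is a Lie group homomorphism and $\Phi:G\to\mathrm{Aut}(H)$ is a smooth action of $G$ on $H$ by automorphisms such that $\Phi(t(p))q=pqp^{-1}$ and $t(\Phi(a)p)=a\,t(p)\,a^{-1}$ for all $p,q\in H$, $a\in G$. A Rota-Baxter operator on a Lie group $G$ is a smooth map $\mathcal{B}:G\to G$ with $\mathcal{B}(a)\mathcal{B}(b)=\mathcal{B}(a\mathcal{B}(a)b\mathcal{B}(a)^{-1})$ for all $a,b\in G$. A Rota-Baxter operator on a crossed module of Lie groups $(H,G,t,\Phi)$ is a pair $(\mathcal{B}_1,\mathcal{B}_0)$ of smooth maps $\mathcal{B}_1:H\to H$, $\mathcal{B}_0:G\to G$ such that (i) $\mathcal{B}_1,\mathcal{B}_0$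 are Rota-Baxter operators on $H$, $G$; (ii) $t\circ\mathcal{B}_1=\mathcal{B}_0\circ t$; (iii) $\Phi(\mathcal{B}_0(a))\mathcal{B}_1(p)=\mathcal{B}_1\big(\Phi(a\mathcal{B}_0(a))(p\mathcal{B}_1(p))\cdot\Phi(\mathcal{B}_0(a))\mathcal{B}_1(p)^{-1}\big)$ for all $a\in G,p\in H$. *)

theory Defs
  imports "HOL-Algebra.Group"
begin

text \<open>Algebraic rendering: Lie groups are modelled as (HOL-Algebra) groups;
smoothness is not expressible.\<close>

definition crossed_module ::
  "('h, 'm) monoid_scheme \<Rightarrow> ('g, 'n) monoid_scheme \<Rightarrow> ('h \<Rightarrow> 'g) \<Rightarrow> ('g \<Rightarrow> 'h \<Rightarrow> 'h) \<Rightarrow> bool" where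
  "crossed_module H G t \<Phi> \<longleftrightarrow>
     group H \<and> group G \<and> t \<in> hom H G \<and>
     (\<forall>a\<in>carrier G. \<Phi> a \<in> iso H H) \<and>
     (\<forall>a\<in>carrier G. \<forall>b\<in>carrier G. \<forall>p\<in>carrier H. \<Phi> (a \<otimes>\<^bsub>G\<^esub> b) p = \<Phi> a (\<Phi> b p)) \<and>
     (\<forall>p\<in>carrier H. \<Phi> \<one>\<^bsub>G\<^esub> p = p) \<and>
     (\<forall>p\<in>carrier H. \<forall>q\<in>carrier H. \<Phi> (t p) q = p \<otimes>\<^bsub>H\<^esub> q \<otimes>\<^bsub>H\<^esub> inv\<^bsub>H\<^esub> p) \<and>
     (\<forall>a\<in>carrier G. \<forall>p\<in>carrier H. t (\<Phi> a p) = a \<otimes>\<^bsub>G\<^esub> t p \<otimes>\<^bsub>G\<^esub> inv\<^bsub>G\<^esub> a)"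

definition rota_baxter :: "('g, 'n) monoid_scheme \<Rightarrow> ('g \<Rightarrow> 'g) \<Rightarrow> bool" where
  "rota_baxter G B \<longleftrightarrow>
     B \<in> carrier G \<rightarrow> carrier G \<and>
     (\<forall>a\<in>carrier G. \<forall>b\<in>carrier G.
        B a \<otimes>\<^bsub>G\<^esub> B b = B (a \<otimes>\<^bsub>G\<^esub> B a \<otimes>\<^bsub>G\<^esub> b \<otimes>\<^bsub>G\<^esub> inv\<^bsub>G\<^esub> (B a)))"

definition rota_baxter_crossed_module ::
  "('h, 'm) monoid_scheme \<Rightarrow> ('g, 'n) monoid_scheme \<Rightarrow> ('h \<Rightarrow> 'g) \<Rightarrow> ('g \<Rightarrow> 'h \<Rightarrow> 'h)
     \<Rightarrow> ('h \<Rightarrow> 'h) \<Rightarrow> ('g \<Rightarrow> 'g) \<Rightarrow> bool" where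
  "rota_baxter_crossed_module H G t \<Phi> B1 B0 \<longleftrightarrow>
     rota_baxter H B1 \<and> rota_baxter G B0 \<and>
     (\<forall>p\<in>carrier H. t (B1 p) = B0 (t p)) \<and>
     (\<forall>a\<in>carrier G. \<forall>p\<in>carrier H.
        \<Phi> (B0 a) (B1 p) =
        B1 (\<Phi> (a \<otimes>\<^bsub>G\<^esub> B0 a) (p \<otimes>\<^bsub>H\<^esub> B1 p) \<otimes>\<^bsub>H\<^esub> inv\<^bsub>H\<^esub> (\<Phi> (B0 a) (B1 p))))"

definition semidirect ::
  "('g, 'n) monoid_scheme \<Rightarrow> ('h, 'm) monoid_scheme \<Rightarrow> ('g \<Rightarrow> 'h \<Rightarrow> 'h) \<Rightarrow> ('g \<times> 'h) monoid" where
  "semidirect G H \<Phi> =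
     \<lparr>carrier = carrier G \<times> carrier H,
      mult = (\<lambda>x y. (fst x \<otimes>\<^bsub>G\<^esub> fst y, snd x \<otimes>\<^bsub>H\<^esub> \<Phi> (fst x) (snd y))),
      one = (\<one>\<^bsub>G\<^esub>, \<one>\<^bsub>H\<^esub>)\<rparr>"

definition semidirect_rb ::
  "('g, 'n) monoid_scheme \<Rightarrow> ('h, 'm) monoid_scheme \<Rightarrow> ('g \<Rightarrow> 'h \<Rightarrow> 'h)
     \<Rightarrow> ('h \<Rightarrow> 'h) \<Rightarrow> ('g \<Rightarrow> 'g) \<Rightarrow> 'g \<times> 'h \<Rightarrow> 'g \<times> 'h" where
  "semidirect_rb G H \<Phi> B1 B0 x =
     (B0 (fst x),
      \<Phi> (B0 (fst x)) (B1 (\<Phi> (inv\<^bsub>G\<^esub> (B0 (fst x)) \<otimes>\<^bsub>G\<^esub> inv\<^bsub>G\<^esub> (fst x)) (snd x))))"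

end

theory Submission
  imports Defs
begin

lemma main_lemma:
  fixes H :: "('h, 'm) monoid_scheme" and G :: "('g, 'n) monoid_scheme"
  assumes cm: "crossed_module H G t \<Phi>"
    and rb: "rota_baxter_crossed_module H G t \<Phi> B1 B0"
  shows "rota_baxter (semidirect G H \<Phi>) (semidirect_rb G H \<Phi> B1 B0)"
proof -
  interpret H: group H using cm unfolding crossed_module_def by blast
  interpret G: group G using cm unfolding crossed_module_def by blast
  have iso: "\<And>a. a \<in> carrier G \<Longrightarrow> \<Phi> a \<in> iso H H" using cm unfolding crossed_module_def by blast
  have Pc[simp]: "\<And>a p. a \<in> carrier G \<Longrightarrow> p \<in> carrier H \<Longrightarrow> \<Phi> a p \<in> carrier H"
    using iso by (auto simp: iso_def hom_def)
  have Pm[simp]: "\<And>a p q. a \<in> carrier G \<Longrightarrow> p \<in> carrier H \<Longrightarrow> q \<in> carrier H \<Longrightarrow> \<Phi> a (p \<otimes>\<^bsub>H\<^esub> q) = \<Phi> a p \<otimes>\<^bsub>H\<^esub> \<Phi> a q"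
    using iso by (auto simp: iso_def hom_def)
  have Pi[simp]: "\<And>a p. a \<in> carrier G \<Longrightarrow> p \<in> carrier H \<Longrightarrow> \<Phi> a (inv\<^bsub>H\<^esub> p) = inv\<^bsub>H\<^esub> (\<Phi> a p)"
  proof -
    fix a p assume a: "a \<in> carrier G" and p: "p \<in> carrier H"
    interpret group_hom H H "\<Phi> a" using iso[OF a] by (simp add: group_hom_def group_hom_axioms_def iso_def H.group_axioms)
    show "\<Phi> a (inv\<^bsub>H\<^esub> p) = inv\<^bsub>H\<^esub> (\<Phi> a p)" using p by simp
  qed
  have Pone[simp]: "\<And>a. a \<in> carrier G \<Longrightarrow> \<Phi> a \<one>\<^bsub>H\<^esub> = \<one>\<^bsub>H\<^esub>"
  proof -
    fix a assume a: "a \<in> carrier G"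
    interpret group_hom H H "\<Phi> a" using iso[OF a] by (simp add: group_hom_def group_hom_axioms_def iso_def H.group_axioms)
    show "\<Phi> a \<one>\<^bsub>H\<^esub> = \<one>\<^bsub>H\<^esub>" by simp
  qed
  have Pcomp: "\<And>a b p. a \<in> carrier G \<Longrightarrow> b \<in> carrier G \<Longrightarrow> p \<in> carrier H \<Longrightarrow> \<Phi> (a \<otimes>\<^bsub>G\<^esub> b) p = \<Phi> a (\<Phi> b p)"
    using cm unfolding crossed_module_def by blast
  have P1[simp]: "\<And>p. p \<in> carrier H \<Longrightarrow> \<Phi> \<one>\<^bsub>G\<^esub> p = p"
    using cm unfolding crossed_module_def by blast
  have rb1: "rota_baxter H B1" and rb0: "rota_baxter G B0" and iii:
    "\<And>a p. a \<in> carrier G \<Longrightarrow> p \<in> carrier H \<Longrightarrow> \<Phi> (B0 a) (B1 p) =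
        B1 (\<Phi> (a \<otimes>\<^bsub>G\<^esub> B0 a) (p \<otimes>\<^bsub>H\<^esub> B1 p) \<otimes>\<^bsub>H\<^esub> inv\<^bsub>H\<^esub> (\<Phi> (B0 a) (B1 p)))"
    using rb unfolding rota_baxter_crossed_module_def by blast+
  have B1c[simp]: "\<And>p. p \<in> carrier H \<Longrightarrow> B1 p \<in> carrier H" using rb1 unfolding rota_baxter_def by blast
  have B0c[simp]: "\<And>a. a \<in> carrier G \<Longrightarrow> B0 a \<in> carrier G" using rb0 unfolding rota_baxter_def by blast
  have RB1: "\<And>a b. a \<in> carrier H \<Longrightarrow> b \<in> carrier H \<Longrightarrow> B1 a \<otimes>\<^bsub>H\<^esub> B1 b = B1 (a \<otimes>\<^bsub>H\<^esub> B1 a \<otimes>\<^bsub>H\<^esub> b \<otimes>\<^bsub>H\<^esub> inv\<^bsub>H\<^esub> (B1 a))"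
    using rb1 unfolding rota_baxter_def by blast
  have RB0: "\<And>a b. a \<in> carrier G \<Longrightarrow> b \<in> carrier G \<Longrightarrow> B0 a \<otimes>\<^bsub>G\<^esub> B0 b = B0 (a \<otimes>\<^bsub>G\<^esub> B0 a \<otimes>\<^bsub>G\<^esub> b \<otimes>\<^bsub>G\<^esub> inv\<^bsub>G\<^esub> (B0 a))"
    using rb0 unfolding rota_baxter_def by blast
  have Gc1[simp]: "\<And>x y. x \<in> carrier G \<Longrightarrow> y \<in> carrier G \<Longrightarrow> inv\<^bsub>G\<^esub> x \<otimes>\<^bsub>G\<^esub> (x \<otimes>\<^bsub>G\<^esub> y) = y"
    by (simp flip: G.m_assoc)
  have Gc2[simp]: "\<And>x y. x \<in> carrier G \<Longrightarrow> y \<in> carrier G \<Longrightarrow> x \<otimes>\<^bsub>G\<^esub> (inv\<^bsub>G\<^esub> x \<otimes>\<^bsub>G\<^esub> y) = y"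
    by (simp flip: G.m_assoc)
  have Hc1[simp]: "\<And>x y. x \<in> carrier H \<Longrightarrow> y \<in> carrier H \<Longrightarrow> inv\<^bsub>H\<^esub> x \<otimes>\<^bsub>H\<^esub> (x \<otimes>\<^bsub>H\<^esub> y) = y"
    by (simp flip: H.m_assoc)
  have Hc2[simp]: "\<And>x y. x \<in> carrier H \<Longrightarrow> y \<in> carrier H \<Longrightarrow> x \<otimes>\<^bsub>H\<^esub> (inv\<^bsub>H\<^esub> x \<otimes>\<^bsub>H\<^esub> y) = y"
    by (simp flip: H.m_assoc)
  have B01: "B0 \<one>\<^bsub>G\<^esub> = \<one>\<^bsub>G\<^esub>"
  proof -
    have "B0 \<one>\<^bsub>G\<^esub> \<otimes>\<^bsub>G\<^esub> B0 \<one>\<^bsub>G\<^esub> = B0 \<one>\<^bsub>G\<^esub>"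
      using RB0[of "\<one>\<^bsub>G\<^esub>" "\<one>\<^bsub>G\<^esub>"] by simp
    then have "B0 \<one>\<^bsub>G\<^esub> \<otimes>\<^bsub>G\<^esub> B0 \<one>\<^bsub>G\<^esub> = B0 \<one>\<^bsub>G\<^esub> \<otimes>\<^bsub>G\<^esub> \<one>\<^bsub>G\<^esub>" by simp
    then show ?thesis by (metis B0c G.l_cancel_one G.one_closed G.r_one)
  qed
  have B0inv: "\<And>b. b \<in> carrier G \<Longrightarrow> B0 (inv\<^bsub>G\<^esub> (B0 b) \<otimes>\<^bsub>G\<^esub> inv\<^bsub>G\<^esub> b \<otimes>\<^bsub>G\<^esub> B0 b) = inv\<^bsub>G\<^esub> (B0 b)"
  proof -
    fix b assume b: "b \<in> carrier G"
    let ?c = "inv\<^bsub>G\<^esub> (B0 b) \<otimes>\<^bsub>G\<^esub> inv\<^bsub>G\<^esub> b \<otimes>\<^bsub>G\<^esub> B0 b"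
    have c: "?c \<in> carrier G" using b by simp
    have "b \<otimes>\<^bsub>G\<^esub> B0 b \<otimes>\<^bsub>G\<^esub> ?c \<otimes>\<^bsub>G\<^esub> inv\<^bsub>G\<^esub> (B0 b) = \<one>\<^bsub>G\<^esub>"
      using b by (simp add: G.m_assoc G.r_inv_ex flip: G.m_assoc) (simp add: G.m_assoc)
    then have "B0 b \<otimes>\<^bsub>G\<^esub> B0 ?c = \<one>\<^bsub>G\<^esub>" using RB0[OF b c] B01 by simp
    then show "B0 ?c = inv\<^bsub>G\<^esub> (B0 b)"
      using b c by (metis B0c G.inv_equality G.inv_comm)
  qed
  let ?S = "semidirect G H \<Phi>"
  let ?B = "semidirect_rb G H \<Phi> B1 B0"
  have Sm: "\<And>x y. x \<otimes>\<^bsub>?S\<^esub> y = (fst x \<otimes>\<^bsub>G\<^esub> fst y, snd x \<otimes>\<^bsub>H\<^esub> \<Phi> (fst x) (snd y))"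
    by (simp add: semidirect_def)
  have mon: "monoid ?S"
  proof (rule monoidI)
    show "\<And>x y. x \<in> carrier ?S \<Longrightarrow> y \<in> carrier ?S \<Longrightarrow> x \<otimes>\<^bsub>?S\<^esub> y \<in> carrier ?S"
      by (auto simp: semidirect_def)
    show "\<one>\<^bsub>?S\<^esub> \<in> carrier ?S" by (simp add: semidirect_def)
    show "\<And>x y z. x \<in> carrier ?S \<Longrightarrow> y \<in> carrier ?S \<Longrightarrow> z \<in> carrier ?S \<Longrightarrow>
      x \<otimes>\<^bsub>?S\<^esub> y \<otimes>\<^bsub>?S\<^esub> z = x \<otimes>\<^bsub>?S\<^esub> (y \<otimes>\<^bsub>?S\<^esub> z)"
      by (auto simp: semidirect_def G.m_assoc H.m_assoc Pcomp)
    show "\<And>x. x \<in> carrier ?S \<Longrightarrow> \<one>\<^bsub>?S\<^esub> \<otimes>\<^bsub>?S\<^esub> x = x"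
      by (auto simp: semidirect_def)
    show "\<And>x. x \<in> carrier ?S \<Longrightarrow> x \<otimes>\<^bsub>?S\<^esub> \<one>\<^bsub>?S\<^esub> = x"
      by (auto simp: semidirect_def)
  qed
  have Sinv: "\<And>a p. a \<in> carrier G \<Longrightarrow> p \<in> carrier H \<Longrightarrow>
      inv\<^bsub>?S\<^esub> (a, p) = (inv\<^bsub>G\<^esub> a, \<Phi> (inv\<^bsub>G\<^esub> a) (inv\<^bsub>H\<^esub> p))"
  proof -
    fix a p assume a: "a \<in> carrier G" and p: "p \<in> carrier H"
    have 1: "(a, p) \<otimes>\<^bsub>?S\<^esub> (inv\<^bsub>G\<^esub> a, \<Phi> (inv\<^bsub>G\<^esub> a) (inv\<^bsub>H\<^esub> p)) = \<one>\<^bsub>?S\<^esub>"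
      using a p by (simp add: semidirect_def flip: Pcomp)
    have 2: "(inv\<^bsub>G\<^esub> a, \<Phi> (inv\<^bsub>G\<^esub> a) (inv\<^bsub>H\<^esub> p)) \<otimes>\<^bsub>?S\<^esub> (a, p) = \<one>\<^bsub>?S\<^esub>"
      using a p by (simp add: semidirect_def)
    show "inv\<^bsub>?S\<^esub> (a, p) = (inv\<^bsub>G\<^esub> a, \<Phi> (inv\<^bsub>G\<^esub> a) (inv\<^bsub>H\<^esub> p))"
      using monoid.inv_unique'[OF mon _ _ 1 2] a p by (simp add: semidirect_def)
  qed
  show ?thesis unfolding rota_baxter_def
  proof (intro conjI ballI)
    show "?B \<in> carrier ?S \<rightarrow> carrier ?S"
      by (auto simp: semidirect_def semidirect_rb_def)
    fix x y assume x: "x \<in> carrier ?S" and y: "y \<in> carrier ?S"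
    obtain a p where xe: "x = (a, p)" and a: "a \<in> carrier G" and p: "p \<in> carrier H"
      using x by (cases x) (auto simp: semidirect_def)
    obtain b q where ye: "y = (b, q)" and b: "b \<in> carrier G" and q: "q \<in> carrier H"
      using y by (cases y) (auto simp: semidirect_def)
    define A where "A = B0 a"
    define Bb where "Bb = B0 b"
    define u where "u = \<Phi> (inv\<^bsub>G\<^esub> A \<otimes>\<^bsub>G\<^esub> inv\<^bsub>G\<^esub> a) p"
    define v where "v = \<Phi> (inv\<^bsub>G\<^esub> Bb \<otimes>\<^bsub>G\<^esub> inv\<^bsub>G\<^esub> b) q"
    have A: "A \<in> carrier G" and Bb: "Bb \<in> carrier G" using a b by (simp_all add: A_def Bb_def)
    have u: "u \<in> carrier H" and v: "v \<in> carrier H" using A Bb a b p q by (simp_all add: u_def v_def)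
    have Bx: "?B (a, p) = (A, \<Phi> A (B1 u))" by (simp add: semidirect_rb_def A_def u_def)
    have By: "?B (b, q) = (Bb, \<Phi> Bb (B1 v))" by (simp add: semidirect_rb_def Bb_def v_def)
    have iBx: "inv\<^bsub>?S\<^esub> (?B (a, p)) = (inv\<^bsub>G\<^esub> A, inv\<^bsub>H\<^esub> (B1 u))"
      using Sinv[of A "\<Phi> A (B1 u)"] A u by (simp add: Bx flip: Pcomp)
    define z1 where "z1 = a \<otimes>\<^bsub>G\<^esub> A \<otimes>\<^bsub>G\<^esub> b \<otimes>\<^bsub>G\<^esub> inv\<^bsub>G\<^esub> A"
    define z2 where "z2 = p \<otimes>\<^bsub>H\<^esub> \<Phi> a (\<Phi> A (B1 u)) \<otimes>\<^bsub>H\<^esub> \<Phi> (a \<otimes>\<^bsub>G\<^esub> A) q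
        \<otimes>\<^bsub>H\<^esub> \<Phi> (a \<otimes>\<^bsub>G\<^esub> A \<otimes>\<^bsub>G\<^esub> b) (inv\<^bsub>H\<^esub> (B1 u))"
    have z: "(a, p) \<otimes>\<^bsub>?S\<^esub> ?B (a, p) \<otimes>\<^bsub>?S\<^esub> (b, q) \<otimes>\<^bsub>?S\<^esub> inv\<^bsub>?S\<^esub> (?B (a, p)) = (z1, z2)"
      by (simp only: Bx) (simp only: iBx[unfolded Bx] Sm, simp add: z1_def z2_def)
    have z1: "z1 \<in> carrier G" and z2: "z2 \<in> carrier H" using a b A u q p by (simp_all add: z1_def z2_def)
    have Bz1: "B0 z1 = A \<otimes>\<^bsub>G\<^esub> Bb" using RB0[OF a b] by (simp add: z1_def A_def Bb_def)
    define c' where "c' = inv\<^bsub>G\<^esub> Bb \<otimes>\<^bsub>G\<^esub> inv\<^bsub>G\<^esub> b"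
    define K where "K = \<Phi> (inv\<^bsub>G\<^esub> Bb) (B1 u)"
    have c': "c' \<in> carrier G" and K: "K \<in> carrier H" using b Bb u by (simp_all add: c'_def K_def)
    define g where "g = inv\<^bsub>G\<^esub> (A \<otimes>\<^bsub>G\<^esub> Bb) \<otimes>\<^bsub>G\<^esub> inv\<^bsub>G\<^esub> z1"
    have g: "g \<in> carrier G" using A Bb z1 by (simp add: g_def)
    have ge: "g = c' \<otimes>\<^bsub>G\<^esub> (inv\<^bsub>G\<^esub> A \<otimes>\<^bsub>G\<^esub> inv\<^bsub>G\<^esub> a)"
      using a b A Bb by (simp add: g_def z1_def c'_def G.inv_mult_group G.m_assoc)
    define w where "w = \<Phi> g z2"
    have w: "w = \<Phi> c' (u \<otimes>\<^bsub>H\<^esub> B1 u) \<otimes>\<^bsub>H\<^esub> v \<otimes>\<^bsub>H\<^esub> inv\<^bsub>H\<^esub> K"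
    proof -
      have e1: "\<Phi> g p = \<Phi> c' u" using ge a A c' p by (simp add: u_def Pcomp)
      have e2: "\<Phi> g (\<Phi> a (\<Phi> A (B1 u))) = \<Phi> c' (B1 u)"
      proof -
        have "g \<otimes>\<^bsub>G\<^esub> (a \<otimes>\<^bsub>G\<^esub> A) = c'" using ge a A c' by (simp add: G.m_assoc)
        then show ?thesis using g a A u by (simp flip: Pcomp)
      qed
      have e3: "\<Phi> g (\<Phi> (a \<otimes>\<^bsub>G\<^esub> A) q) = v"
      proof -
        have "g \<otimes>\<^bsub>G\<^esub> (a \<otimes>\<^bsub>G\<^esub> A) = c'" using ge a A c' by (simp add: G.m_assoc)
        then show ?thesis using g a A q by (simp add: v_def c'_def flip: Pcomp)
      qed
      have e4: "\<Phi> g (\<Phi> (a \<otimes>\<^bsub>G\<^esub> A \<otimes>\<^bsub>G\<^esub> b) (inv\<^bsub>H\<^esub> (B1 u))) = inv\<^bsub>H\<^esub> K"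
      proof -
        have "g \<otimes>\<^bsub>G\<^esub> (a \<otimes>\<^bsub>G\<^esub> A \<otimes>\<^bsub>G\<^esub> b) = inv\<^bsub>G\<^esub> Bb"
          using ge a A b Bb by (simp add: c'_def G.m_assoc)
        then show ?thesis using g a A b Bb u by (simp add: K_def flip: Pcomp)
      qed
      show ?thesis using e1 e2 e3 e4 g a A b u p q c' v K
        by (simp add: w_def z2_def H.m_assoc)
    qed
    define cc where "cc = inv\<^bsub>G\<^esub> Bb \<otimes>\<^bsub>G\<^esub> inv\<^bsub>G\<^esub> b \<otimes>\<^bsub>G\<^esub> Bb"
    have cc: "cc \<in> carrier G" using b Bb by (simp add: cc_def)
    have Bcc: "B0 cc = inv\<^bsub>G\<^esub> Bb" using B0inv[OF b] by (simp add: cc_def Bb_def)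
    have ccB: "cc \<otimes>\<^bsub>G\<^esub> B0 cc = c'" using Bcc b Bb by (simp add: cc_def c'_def G.m_assoc)
    have m: "K = B1 (\<Phi> c' (u \<otimes>\<^bsub>H\<^esub> B1 u) \<otimes>\<^bsub>H\<^esub> inv\<^bsub>H\<^esub> K)"
      using iii[OF cc u] using ccB by (simp add: Bcc K_def)
    define m where "m = \<Phi> c' (u \<otimes>\<^bsub>H\<^esub> B1 u) \<otimes>\<^bsub>H\<^esub> inv\<^bsub>H\<^esub> K"
    have Km: "B1 m = K" using m by (simp add: m_def)
    have mc: "m \<in> carrier H" using c' u K by (simp add: m_def)
    have Bw: "B1 w = K \<otimes>\<^bsub>H\<^esub> B1 v"
    proof -
      have "B1 m \<otimes>\<^bsub>H\<^esub> B1 v = B1 (m \<otimes>\<^bsub>H\<^esub> B1 m \<otimes>\<^bsub>H\<^esub> v \<otimes>\<^bsub>H\<^esub> inv\<^bsub>H\<^esub> (B1 m))"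
        using RB1[OF mc v] .
      also have "m \<otimes>\<^bsub>H\<^esub> B1 m \<otimes>\<^bsub>H\<^esub> v \<otimes>\<^bsub>H\<^esub> inv\<^bsub>H\<^esub> (B1 m) = w"
        using Km c' u K v by (simp add: w m_def H.m_assoc)
      finally show ?thesis using Km by simp
    qed
    have "?B (z1, z2) = (A \<otimes>\<^bsub>G\<^esub> Bb, \<Phi> (A \<otimes>\<^bsub>G\<^esub> Bb) (B1 w))"
      by (simp add: semidirect_rb_def Bz1 w_def g_def)
    also have "\<Phi> (A \<otimes>\<^bsub>G\<^esub> Bb) (B1 w) = \<Phi> A (B1 u) \<otimes>\<^bsub>H\<^esub> \<Phi> A (\<Phi> Bb (B1 v))"
      using A Bb u v K by (simp add: Bw Pcomp K_def G.m_assoc flip: Pcomp)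
    finally show "?B x \<otimes>\<^bsub>?S\<^esub> ?B y = ?B (x \<otimes>\<^bsub>?S\<^esub> ?B x \<otimes>\<^bsub>?S\<^esub> y \<otimes>\<^bsub>?S\<^esub> inv\<^bsub>?S\<^esub> (?B x))"
      unfolding xe ye z by (simp only: Bx By Sm) simp
  qed
qed

theorem theorem2p6:
  fixes H :: "('h, 'm) monoid_scheme" and G :: "('g, 'n) monoid_scheme"
  assumes "crossed_module H G t \<Phi>"
    and "rota_baxter_crossed_module H G t \<Phi> B1 B0"
  shows "rota_baxter (semidirect G H \<Phi>) (semidirect_rb G H \<Phi> B1 B0)"
  using main_lemma[OF assms] .

end
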